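(* Fix an integer $L\ge 2$, parameters $w_1,w_2,\alpha>0$, $f_1,f_2\in\mathbb{R}$ with $|f_i|\le w_i$, and $\gamma\in\mathbb{R}$ with $|\gamma|\le\alpha$. For all $\rho_1,\rho_2\ge 0$, the product probability measure on $(\mathbb{N}_0^2)^{\mathbb{Z}_L}$ under which all $n^1_k,n^2_k$ ($k\in\mathbb{Z}_L$) are independent, with $n^1_k\sim\mathrm{Poisson}(\rho_1)$ and $n^2_k\sim\mathrm{Poisson}(\rho_2)$, i.e. $$\mu(\eta)=\prod_{k\in\mathbb{Z}_L}\frac{\rho_1^{n^1_k}e^{-\rho_1}}{n^1_k!}\,\frac{\rho_2^{n^2_k}e^{-\rho_2}}{n^2_k!},$$ is an invariant (stationary) measure of the two-lane lattice gas defined in the context. It is also translation invariant.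
   Context: Two-lane lattice gas on the discrete torus $\mathbb{Z}_L=\mathbb{Z}/L\mathbb{Z}$. A configuration is $\eta=(n^1_k,n^2_k)_{k\in\mathbb{Z}_L}\in(\mathbb{N}_0^2)^{\mathbb{Z}_L}$, where $n^i_k$ is the number of particles of lane $i\in\{1,2\}$ at site $k$. Parameters: $w_1,w_2,\alpha>0$, $f_1,f_2\in\mathbb{R}$ with $|f_i|\le w_i$, $\gamma\in\mathbb{R}$ with $|\gamma|\le\alpha$. Set $r_i=\tfrac12(w_i+f_i)$, $\ell_i=\tfrac12(w_i-f_i)$, $g^\pm=\tfrac12(\alpha\pm\gamma)$ (all nonnegative), and $\bar n^i_k=\tfrac12(n^i_k+n^i_{k+1})$. The process is the continuous-time Markov chain in which, for each $k\in\mathbb{Z}_L$: one lane-1 particle moves from $k$ to $k+1$ at rate $n^1_k\,(r_1+g^+\bar n^2_k)$; one lane-1 particle moves from $k+1$ to $k$ at rate $n^1_{k+1}\,(\ell_1+g^-\bar n^2_k)$; one lane-2 particle moves from $k$ to $k+1$ at rate $n^2_k\,(r_2+g^+\bar n^1_k)$; one lane-2 particle moves from $k+1$ to $k$ at rate $n^2_{k+1}\,(\ell_2+g^-\bar n^1_k)$. (Thus each particle jumps independently of the other particles of its own lane, with rates depending on the occupation of the other lane on the same pair of sites.) A measure is invariant if it is stationary under this dynamics. *)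

theory Defs
  imports "HOL-Analysis.Analysis"
begin

text \<open>Configurations on the torus Z_L = {0..<L}: eta i k = n^i_k for lane i in {1,2},
  site k < L; all other values are 0 (normal form).\<close>

type_synonym config = "nat \<Rightarrow> nat \<Rightarrow> nat"

definition configs :: "nat \<Rightarrow> config set" where
  "configs L = {\<eta>. \<forall>i k. (i \<notin> {1,2} \<or> k \<ge> L) \<longrightarrow> \<eta> i k = 0}"

definition succ_site :: "nat \<Rightarrow> nat \<Rightarrow> nat" where
  "succ_site L k = (k + 1) mod L"

definition other_lane :: "nat \<Rightarrow> nat" where
  "other_lane i = 3 - i"

definition nbar :: "nat \<Rightarrow> config \<Rightarrow> nat \<Rightarrow> nat \<Rightarrow> real" where
  "nbar L \<eta> j k = (real (\<eta> j k) + real (\<eta> j (succ_site L k))) / 2"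

definition move :: "config \<Rightarrow> nat \<Rightarrow> nat \<Rightarrow> nat \<Rightarrow> config" where
  "move \<eta> i a b = \<eta>(i := (\<eta> i)(a := \<eta> i a - 1, b := \<eta> i b + 1))"

text \<open>Elementary transitions are indexed by (i, k, d): lane i, bond (k, k+1),
  direction d (True = right, k -> k+1; False = left, k+1 -> k).\<close>
definition trans_idx :: "nat \<Rightarrow> (nat \<times> nat \<times> bool) set" where
  "trans_idx L = {1,2} \<times> {0..<L} \<times> UNIV"

definition jump :: "nat \<Rightarrow> config \<Rightarrow> nat \<times> nat \<times> bool \<Rightarrow> config" where
  "jump L \<eta> t = (case t of (i, k, d) \<Rightarrow>
     if d then move \<eta> i k (succ_site L k) else move \<eta> i (succ_site L k) k)"

definition jrate :: "nat \<Rightarrow> (nat \<Rightarrow> real) \<Rightarrow> (nat \<Rightarrow> real) \<Rightarrow> real \<Rightarrow> real \<Rightarrow>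
                     config \<Rightarrow> nat \<times> nat \<times> bool \<Rightarrow> real" where
  "jrate L w f \<alpha> \<gamma> \<eta> t = (case t of (i, k, d) \<Rightarrow>
     if d then real (\<eta> i k) * ((w i + f i) / 2 + (\<alpha> + \<gamma>) / 2 * nbar L \<eta> (other_lane i) k)
     else real (\<eta> i (succ_site L k)) * ((w i - f i) / 2 + (\<alpha> - \<gamma>) / 2 * nbar L \<eta> (other_lane i) k))"

definition qrate :: "nat \<Rightarrow> (nat \<Rightarrow> real) \<Rightarrow> (nat \<Rightarrow> real) \<Rightarrow> real \<Rightarrow> real \<Rightarrow>
                     config \<Rightarrow> config \<Rightarrow> real" where
  "qrate L w f \<alpha> \<gamma> \<eta> \<eta>' =
     (\<Sum>t\<in>trans_idx L. if jump L \<eta> t = \<eta>' then jrate L w f \<alpha> \<gamma> \<eta> t else 0)"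

text \<open>Stationarity (global balance, \<mu> Q = 0) of a measure \<mu> on the countable state space S.\<close>
definition stationary :: "('s \<Rightarrow> real) \<Rightarrow> ('s \<Rightarrow> 's \<Rightarrow> real) \<Rightarrow> 's set \<Rightarrow> bool" where
  "stationary \<mu> q S \<longleftrightarrow>
     (\<forall>\<eta>\<in>S. (\<Sum>\<^sub>\<infinity>\<eta>'\<in>S - {\<eta>}. \<mu> \<eta>' * q \<eta>' \<eta>) = \<mu> \<eta> * (\<Sum>\<^sub>\<infinity>\<eta>'\<in>S - {\<eta>}. q \<eta> \<eta>'))"

definition poisson_prod :: "nat \<Rightarrow> (nat \<Rightarrow> real) \<Rightarrow> config \<Rightarrow> real" where
  "poisson_prod L \<rho> \<eta> =
     (\<Prod>k\<in>{0..<L}. \<Prod>i\<in>{1,2}. \<rho> i ^ \<eta> i k * exp (- \<rho> i) / fact (\<eta> i k))"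

definition shift :: "nat \<Rightarrow> config \<Rightarrow> config" where
  "shift L \<eta> = (\<lambda>i k. if k < L then \<eta> i (succ_site L k) else 0)"

end

theory Submission
  imports Defs
begin

lemma succ_bij: assumes "L > 0" shows "bij_betw (succ_site L) {0..<L} {0..<L}"
proof -
  have inj: "inj_on (succ_site L) {0..<L}"
  proof (rule inj_onI)
    fix a b assume a: "a \<in> {0..<L}" and b: "b \<in> {0..<L}" and e: "succ_site L a = succ_site L b"
    have a': "a + 1 \<le> L" and b': "b + 1 \<le> L" using a b by auto
    show "a = b"
    proof (cases "a + 1 = L")
      case True
      then have "succ_site L a = 0" by (simp add: succ_site_def)
      then have "(b + 1) mod L = 0" using e by (simp add: succ_site_def)
      then have "b + 1 = L" using b' by (cases "b + 1 = L") auto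
      then show ?thesis using True by simp
    next
      case False
      then have "succ_site L a = a + 1" using a' by (simp add: succ_site_def)
      moreover have "b + 1 \<noteq> L"
      proof
        assume "b + 1 = L" then have "succ_site L b = 0" by (simp add: succ_site_def)
        then show False using e \<open>succ_site L a = a + 1\<close> by simp
      qed
      then have "succ_site L b = b + 1" using b' by (simp add: succ_site_def)
      ultimately have "a + 1 = b + 1" using e by metis
      then show ?thesis by simp
    qed
  qed
  have "succ_site L ` {0..<L} \<subseteq> {0..<L}" using assms by (auto simp: succ_site_def)
  with inj have "succ_site L ` {0..<L} = {0..<L}" by (simp add: endo_inj_surj)
  with inj show ?thesis by (simp add: bij_betw_def)
qed

lemma sum_succ: assumes "L > 0" shows "(\<Sum>k\<in>{0..<L}. g (succ_site L k)) = (\<Sum>k\<in>{0..<L}. (g k :: real))"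
  using sum.reindex_bij_betw[OF succ_bij[OF assms], of g] by simp

lemma prod_succ: assumes "L > 0" shows "(\<Prod>k\<in>{0..<L}. g (succ_site L k)) = (\<Prod>k\<in>{0..<L}. (g k :: real))"
  using prod.reindex_bij_betw[OF succ_bij[OF assms], of g] by simp

lemma succ_props: assumes "L \<ge> 2" "k < L" shows "succ_site L k < L" "succ_site L k \<noteq> k"
proof -
  show "succ_site L k < L" using assms by (simp add: succ_site_def)
  show "succ_site L k \<noteq> k"
  proof (cases "k + 1 < L")
    case True thus ?thesis by (simp add: succ_site_def)
  next
    case False then have "k + 1 = L" using assms by simp
    then show ?thesis using assms by (simp add: succ_site_def)
  qed
qed

definition phi :: "(nat \<Rightarrow> real) \<Rightarrow> nat \<Rightarrow> nat \<Rightarrow> real" where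
 "phi \<rho> i n = \<rho> i ^ n * exp (- \<rho> i) / fact n"

lemma pp_split: "poisson_prod L \<rho> \<eta> = (\<Prod>k\<in>{0..<L}. phi \<rho> 1 (\<eta> 1 k)) * (\<Prod>k\<in>{0..<L}. phi \<rho> 2 (\<eta> 2 k))"
  unfolding poisson_prod_def phi_def prod.distrib[symmetric] by (rule prod.cong) simp_all

lemma prod_two_change:
  assumes "a \<in> K" "b \<in> K" "a \<noteq> b" "finite K" "\<forall>k. k \<noteq> a \<longrightarrow> k \<noteq> b \<longrightarrow> g k = h k"
  shows "(\<Prod>k\<in>K. F (g k)) = F (g a) * F (g b) * (\<Prod>k\<in>K-{a,b}. (F (h k) :: real))"
proof -
  have "(\<Prod>k\<in>K. F (g k)) = F (g a) * (\<Prod>k\<in>K-{a}. F (g k))" using prod.remove[OF assms(4,1)] by simp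
  also have "(\<Prod>k\<in>K-{a}. F (g k)) = F (g b) * (\<Prod>k\<in>K-{a}-{b}. F (g k))"
    using prod.remove[of "K-{a}" b "\<lambda>k. F (g k)"] assms by simp
  also have "(\<Prod>k\<in>K-{a}-{b}. F (g k)) = (\<Prod>k\<in>K-{a,b}. F (h k))"
    by (rule prod.cong) (use assms in auto)
  finally show ?thesis by simp
qed

lemma mu_change:
  assumes "i \<in> {1,2}" "a < L" "b < L" "a \<noteq> b" "\<forall>k. k \<noteq> a \<longrightarrow> k \<noteq> b \<longrightarrow> g k = \<eta> i k"
  shows "poisson_prod L \<rho> (\<eta>(i:=g)) = phi \<rho> i (g a) * phi \<rho> i (g b) *
     ((\<Prod>k\<in>{0..<L}-{a,b}. phi \<rho> i (\<eta> i k)) * (\<Prod>k\<in>{0..<L}. phi \<rho> (3-i) (\<eta> (3-i) k)))"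
proof -
  have P: "(\<Prod>k\<in>{0..<L}. phi \<rho> i (g k)) = phi \<rho> i (g a) * phi \<rho> i (g b) * (\<Prod>k\<in>{0..<L}-{a,b}. phi \<rho> i (\<eta> i k))"
    by (rule prod_two_change) (use assms in auto)
  show ?thesis using assms(1)
  proof
    assume "i = 1" then show ?thesis using P by (simp add: pp_split)
  next
    assume "i \<in> {2}" then have "i = 2" by simp
    then show ?thesis using P by (simp add: pp_split)
  qed
qed

lemma phi_Suc: "phi \<rho> i (Suc n) * real (Suc n) = \<rho> i * phi \<rho> i n"
proof -
  have f: "(fact (Suc n)::real) = real (Suc n) * fact n" by (simp only: fact_Suc of_nat_mult)
  have "real (Suc n) \<noteq> 0" "(fact n::real) \<noteq> 0" by auto
  then show ?thesis unfolding phi_def f by (simp add: field_simps del: of_nat_Suc)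
qed

lemma phi_shift: assumes "na \<ge> 1"
  shows "phi \<rho> i (na - 1) * phi \<rho> i (nb + 1) * real (nb + 1) = phi \<rho> i na * phi \<rho> i nb * real na"
proof -
  obtain p where p: "na = Suc p" using assms by (cases na) auto
  have "phi \<rho> i (na - 1) * phi \<rho> i (nb + 1) * real (nb + 1) = phi \<rho> i p * (phi \<rho> i (Suc nb) * real (Suc nb))"
    unfolding p by (metis Suc_eq_plus1 diff_Suc_1 mult.assoc)
  also have "\<dots> = phi \<rho> i p * (\<rho> i * phi \<rho> i nb)" by (simp only: phi_Suc)
  also have "\<dots> = (phi \<rho> i (Suc p) * real (Suc p)) * phi \<rho> i nb" using phi_Suc[of \<rho> i p] by (simp only: mult_ac)
  also have "\<dots> = phi \<rho> i na * phi \<rho> i nb * real na" unfolding p by (simp only: mult_ac)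
  finally show ?thesis .
qed

lemma mu_move:
  assumes "i \<in> {1,2}" "a < L" "b < L" "a \<noteq> b" "\<eta> i a \<ge> 1"
  shows "poisson_prod L \<rho> (move \<eta> i a b) * real (\<eta> i b + 1) = poisson_prod L \<rho> \<eta> * real (\<eta> i a)"
proof -
  define R where "R = ((\<Prod>k\<in>{0..<L}-{a,b}. phi \<rho> i (\<eta> i k)) * (\<Prod>k\<in>{0..<L}. phi \<rho> (3-i) (\<eta> (3-i) k)))"
  have 1: "poisson_prod L \<rho> (move \<eta> i a b) = phi \<rho> i (\<eta> i a - 1) * phi \<rho> i (\<eta> i b + 1) * R"
    unfolding move_def R_def
    using mu_change[where i=i and a=a and L=L and b=b and g="(\<eta> i)(a := \<eta> i a - 1, b := \<eta> i b + 1)" and \<eta>=\<eta> and \<rho>=\<rho>] assms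
    by simp
  have 2: "poisson_prod L \<rho> \<eta> = phi \<rho> i (\<eta> i a) * phi \<rho> i (\<eta> i b) * R"
    using mu_change[of i a L b "\<eta> i" \<eta> \<rho>] assms unfolding R_def by simp
  have "phi \<rho> i (\<eta> i a - 1) * phi \<rho> i (\<eta> i b + 1) * R * real (\<eta> i b + 1)
      = (phi \<rho> i (\<eta> i a - 1) * phi \<rho> i (\<eta> i b + 1) * real (\<eta> i b + 1)) * R" by (simp only: mult_ac)
  also have "\<dots> = (phi \<rho> i (\<eta> i a) * phi \<rho> i (\<eta> i b) * real (\<eta> i a)) * R"
    by (simp only: phi_shift[OF assms(5)])
  also have "\<dots> = phi \<rho> i (\<eta> i a) * phi \<rho> i (\<eta> i b) * R * real (\<eta> i a)" by (simp only: mult_ac)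
  finally show ?thesis unfolding 1 2 .
qed

lemma move_inv1: assumes "a \<noteq> b" "\<eta>' i a \<noteq> 0" "move \<eta>' i a b = \<eta>" shows "\<eta>' = move \<eta> i b a"
  using assms(1,2) unfolding assms(3)[symmetric] by (auto simp: move_def fun_eq_iff)

lemma move_inv2: assumes "a \<noteq> b" "\<eta> i b \<ge> 1" shows "move (move \<eta> i b a) i a b = \<eta>"
  using assms by (auto simp: move_def fun_eq_iff)

lemma move_inv3: assumes "a \<noteq> b" "\<eta> i b = 0" shows "move (move \<eta> i b a) i a b \<noteq> \<eta>"
proof
  assume "move (move \<eta> i b a) i a b = \<eta>"
  then have "move (move \<eta> i b a) i a b i b = \<eta> i b" by simp
  then show False using assms by (simp add: move_def)
qed

lemma move_ne: assumes "a \<noteq> b" shows "move \<eta> i a b \<noteq> \<eta>"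
proof
  assume "move \<eta> i a b = \<eta>"
  then have "move \<eta> i a b i b = \<eta> i b" by simp
  then show False using assms by (simp add: move_def)
qed

lemma move_at_b: "a \<noteq> b \<Longrightarrow> move \<eta> i a b i b = \<eta> i b + 1"
  by (simp add: move_def)

lemma nbar_move: assumes "i \<in> {1,2}" shows "nbar L (move \<eta> i a b) (other_lane i) k = nbar L \<eta> (other_lane i) k"
  using assms by (auto simp: nbar_def move_def other_lane_def)

lemma move_configs: assumes "\<eta> \<in> configs L" "i \<in> {1,2}" "a < L" "b < L" shows "move \<eta> i a b \<in> configs L"
  using assms unfolding configs_def move_def by auto

definition inv_jump :: "nat \<Rightarrow> config \<Rightarrow> nat \<times> nat \<times> bool \<Rightarrow> config" where
 "inv_jump L \<eta> t = (case t of (i,k,d) \<Rightarrow> if d then move \<eta> i (succ_site L k) k else move \<eta> i k (succ_site L k))"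

definition rrate :: "nat \<Rightarrow> (nat \<Rightarrow> real) \<Rightarrow> (nat \<Rightarrow> real) \<Rightarrow> real \<Rightarrow> real \<Rightarrow> config \<Rightarrow> nat \<times> nat \<times> bool \<Rightarrow> real" where
 "rrate L w f \<alpha> \<gamma> \<eta> t = (case t of (i,k,d) \<Rightarrow>
  if d then real (\<eta> i (succ_site L k)) * ((w i + f i)/2 + (\<alpha>+\<gamma>)/2 * nbar L \<eta> (other_lane i) k)
  else real (\<eta> i k) * ((w i - f i)/2 + (\<alpha>-\<gamma>)/2 * nbar L \<eta> (other_lane i) k))"

lemma keyA:
  assumes "L \<ge> 2" "t \<in> trans_idx L" "jump L \<eta>' t = \<eta>" "jrate L w f \<alpha> \<gamma> \<eta>' t \<noteq> 0"
  shows "\<eta>' = inv_jump L \<eta> t"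
proof -
  obtain i k d where t: "t = (i,k,d)" by (cases t) auto
  have k: "k < L" using assms(2) t by (simp add: trans_idx_def)
  note sp = succ_props[OF assms(1) k]
  show ?thesis
  proof (cases d)
    case True
    then show ?thesis using assms(3,4) sp unfolding t inv_jump_def jump_def jrate_def
      by (auto intro: move_inv1)
  next
    case False
    then show ?thesis using assms(3,4) sp unfolding t inv_jump_def jump_def jrate_def
      by (auto intro: move_inv1)
  qed
qed

lemma keyB:
  assumes "L \<ge> 2" "t \<in> trans_idx L"
  shows "(if jump L (inv_jump L \<eta> t) t = \<eta> then poisson_prod L \<rho> (inv_jump L \<eta> t) * jrate L w f \<alpha> \<gamma> (inv_jump L \<eta> t) t else 0)
     = poisson_prod L \<rho> \<eta> * rrate L w f \<alpha> \<gamma> \<eta> t"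
proof -
  obtain i k d where t: "t = (i,k,d)" by (cases t) auto
  have k: "k < L" and i: "i \<in> {1,2}" using assms(2) t by (auto simp: trans_idx_def)
  note sp = succ_props[OF assms(1) k]
  show ?thesis
  proof (cases d)
    case True
    show ?thesis
    proof (cases "\<eta> i (succ_site L k) \<ge> 1")
      case c: True
      have mm: "poisson_prod L \<rho> (move \<eta> i (succ_site L k) k) * real (\<eta> i k + 1) = poisson_prod L \<rho> \<eta> * real (\<eta> i (succ_site L k))"
        using mu_move[where i=i and a="succ_site L k" and b=k and \<eta>=\<eta> and L=L and \<rho>=\<rho>, OF i sp(1) k sp(2) c] .
      show ?thesis using True c sp mm unfolding t inv_jump_def jump_def jrate_def rrate_def
        by (simp add: move_inv2 move_at_b nbar_move[OF i] mult.assoc[symmetric] del: of_nat_Suc)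
    next
      case c: False
      then show ?thesis using True sp move_inv3[of k "succ_site L k" \<eta> i] unfolding t inv_jump_def jump_def jrate_def rrate_def
        by simp
    qed
  next
    case False
    show ?thesis
    proof (cases "\<eta> i k \<ge> 1")
      case c: True
      have mm: "poisson_prod L \<rho> (move \<eta> i k (succ_site L k)) * real (\<eta> i (succ_site L k) + 1) = poisson_prod L \<rho> \<eta> * real (\<eta> i k)"
        using mu_move[where i=i and a=k and b="succ_site L k" and \<eta>=\<eta> and L=L and \<rho>=\<rho>, OF i k sp(1) sp(2)[symmetric] c] .
      show ?thesis using False c sp mm unfolding t inv_jump_def jump_def jrate_def rrate_def
        by (simp add: move_inv2 move_at_b nbar_move[OF i] mult.assoc[symmetric] del: of_nat_Suc)
    next
      case c: False
      then show ?thesis using False sp move_inv3[of "succ_site L k" k \<eta> i] unfolding t inv_jump_def jump_def jrate_def rrate_def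
        by simp
    qed
  qed
qed

lemma sum_trans: "(\<Sum>t\<in>trans_idx L. h t) = (\<Sum>k\<in>{0..<L}. h (1,k,True) + h (1,k,False) + h (2,k,True) + h (2,k,False))"
  unfolding trans_idx_def sum.cartesian_product' UNIV_bool by (simp add: sum.distrib ac_simps)

lemma rate_balance: assumes "L \<ge> 2"
  shows "(\<Sum>t\<in>trans_idx L. rrate L w f \<alpha> \<gamma> \<eta> t) = (\<Sum>t\<in>trans_idx L. jrate L w f \<alpha> \<gamma> \<eta> t)"
proof -
  define G where "G k = f 1 * real (\<eta> 1 k) + f 2 * real (\<eta> 2 k) + \<gamma> * real (\<eta> 1 k) * real (\<eta> 2 k)" for k
  have pk: "rrate L w f \<alpha> \<gamma> \<eta> (1,k,True) + rrate L w f \<alpha> \<gamma> \<eta> (1,k,False) + rrate L w f \<alpha> \<gamma> \<eta> (2,k,True) + rrate L w f \<alpha> \<gamma> \<eta> (2,k,False)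
    = (jrate L w f \<alpha> \<gamma> \<eta> (1,k,True) + jrate L w f \<alpha> \<gamma> \<eta> (1,k,False) + jrate L w f \<alpha> \<gamma> \<eta> (2,k,True) + jrate L w f \<alpha> \<gamma> \<eta> (2,k,False))
      + (G (succ_site L k) - G k)" for k
    unfolding rrate_def jrate_def G_def nbar_def other_lane_def by (simp add: field_simps)
  have "(\<Sum>t\<in>trans_idx L. rrate L w f \<alpha> \<gamma> \<eta> t) = (\<Sum>k\<in>{0..<L}. (jrate L w f \<alpha> \<gamma> \<eta> (1,k,True) + jrate L w f \<alpha> \<gamma> \<eta> (1,k,False) + jrate L w f \<alpha> \<gamma> \<eta> (2,k,True) + jrate L w f \<alpha> \<gamma> \<eta> (2,k,False))
      + (G (succ_site L k) - G k))"
    unfolding sum_trans pk ..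
  also have "\<dots> = (\<Sum>t\<in>trans_idx L. jrate L w f \<alpha> \<gamma> \<eta> t) + ((\<Sum>k\<in>{0..<L}. G (succ_site L k)) - (\<Sum>k\<in>{0..<L}. G k))"
    unfolding sum_trans by (simp add: sum.distrib sum_subtractf)
  also have "(\<Sum>k\<in>{0..<L}. G (succ_site L k)) = (\<Sum>k\<in>{0..<L}. G k)" using assms by (intro sum_succ) auto
  finally show ?thesis by simp
qed

theorem proposition2:
  fixes L :: nat and w f \<rho> :: "nat \<Rightarrow> real" and \<alpha> \<gamma> :: real
  assumes "L \<ge> 2"
    and "w 1 > 0" and "w 2 > 0" and "\<alpha> > 0"
    and "\<bar>f 1\<bar> \<le> w 1" and "\<bar>f 2\<bar> \<le> w 2" and "\<bar>\<gamma>\<bar> \<le> \<alpha>"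
    and "\<rho> 1 \<ge> 0" and "\<rho> 2 \<ge> 0"
  shows "stationary (poisson_prod L \<rho>) (qrate L w f \<alpha> \<gamma>) (configs L)
     \<and> (\<forall>\<eta>\<in>configs L. poisson_prod L \<rho> (shift L \<eta>) = poisson_prod L \<rho> \<eta>)"
proof
  have L0: "L > 0" using assms(1) by simp
  have finT: "finite (trans_idx L)" by (simp add: trans_idx_def)
  have jump_in: "jump L \<eta> t \<in> configs L - {\<eta>}" if "\<eta> \<in> configs L" "t \<in> trans_idx L" for \<eta> t
  proof -
    obtain i k d where t: "t = (i,k,d)" by (cases t) auto
    have k: "k < L" and i: "i \<in> {1,2}" using that(2) t by (auto simp: trans_idx_def)
    note sp = succ_props[OF assms(1) k]
    show ?thesis using move_configs[OF that(1) i] move_ne sp k unfolding t jump_def by auto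
  qed
  have inv_in: "inv_jump L \<eta> t \<in> configs L - {\<eta>}" if "\<eta> \<in> configs L" "t \<in> trans_idx L" for \<eta> t
  proof -
    obtain i k d where t: "t = (i,k,d)" by (cases t) auto
    have k: "k < L" and i: "i \<in> {1,2}" using that(2) t by (auto simp: trans_idx_def)
    note sp = succ_props[OF assms(1) k]
    show ?thesis using move_configs[OF that(1) i] move_ne sp k unfolding t inv_jump_def by auto
  qed
  show "stationary (poisson_prod L \<rho>) (qrate L w f \<alpha> \<gamma>) (configs L)"
    unfolding stationary_def
  proof
    fix \<eta> assume \<eta>: "\<eta> \<in> configs L"
    define F where "F = inv_jump L \<eta> ` trans_idx L"
    have finF: "finite F" unfolding F_def using finT by simp
    have FS: "F \<subseteq> configs L - {\<eta>}" unfolding F_def using inv_in[OF \<eta>] by auto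
    have "(\<Sum>\<^sub>\<infinity>\<eta>'\<in>configs L - {\<eta>}. poisson_prod L \<rho> \<eta>' * qrate L w f \<alpha> \<gamma> \<eta>' \<eta>)
        = (\<Sum>\<^sub>\<infinity>\<eta>'\<in>F. poisson_prod L \<rho> \<eta>' * qrate L w f \<alpha> \<gamma> \<eta>' \<eta>)"
    proof (rule infsum_cong_neutral)
      fix x assume x: "x \<in> configs L - {\<eta>} - F"
      have "qrate L w f \<alpha> \<gamma> x \<eta> = 0" unfolding qrate_def
      proof (rule sum.neutral, rule ballI)
        fix t assume t: "t \<in> trans_idx L"
        show "(if jump L x t = \<eta> then jrate L w f \<alpha> \<gamma> x t else 0) = 0"
        proof (rule ccontr)
          assume "(if jump L x t = \<eta> then jrate L w f \<alpha> \<gamma> x t else 0) \<noteq> 0"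
          then have "x = inv_jump L \<eta> t" using keyA[OF assms(1) t] by (auto split: if_splits)
          then show False using x t unfolding F_def by auto
        qed
      qed
      then show "poisson_prod L \<rho> x * qrate L w f \<alpha> \<gamma> x \<eta> = 0" by simp
    qed (use FS in auto)
    also have "\<dots> = (\<Sum>\<eta>'\<in>F. poisson_prod L \<rho> \<eta>' * qrate L w f \<alpha> \<gamma> \<eta>' \<eta>)" using finF by simp
    also have "\<dots> = (\<Sum>\<eta>'\<in>F. \<Sum>t\<in>trans_idx L. if jump L \<eta>' t = \<eta> then poisson_prod L \<rho> \<eta>' * jrate L w f \<alpha> \<gamma> \<eta>' t else 0)"
      unfolding qrate_def sum_distrib_left by (intro sum.cong) auto
    also have "\<dots> = (\<Sum>t\<in>trans_idx L. \<Sum>\<eta>'\<in>F. if jump L \<eta>' t = \<eta> then poisson_prod L \<rho> \<eta>' * jrate L w f \<alpha> \<gamma> \<eta>' t else 0)"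
      by (rule sum.swap)
    also have "\<dots> = (\<Sum>t\<in>trans_idx L. poisson_prod L \<rho> \<eta> * rrate L w f \<alpha> \<gamma> \<eta> t)"
    proof (rule sum.cong[OF refl])
      fix t assume t: "t \<in> trans_idx L"
      define h where "h \<eta>' = (if jump L \<eta>' t = \<eta> then poisson_prod L \<rho> \<eta>' * jrate L w f \<alpha> \<gamma> \<eta>' t else 0)" for \<eta>'
      have inF: "inv_jump L \<eta> t \<in> F" unfolding F_def using t by simp
      have "(\<Sum>\<eta>'\<in>F. h \<eta>') = h (inv_jump L \<eta> t) + (\<Sum>\<eta>'\<in>F - {inv_jump L \<eta> t}. h \<eta>')"
        using sum.remove[OF finF inF] .
      also have "(\<Sum>\<eta>'\<in>F - {inv_jump L \<eta> t}. h \<eta>') = 0"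
      proof (rule sum.neutral, rule ballI)
        fix x assume x: "x \<in> F - {inv_jump L \<eta> t}"
        show "h x = 0"
        proof (rule ccontr)
          assume "h x \<noteq> 0"
          then have "x = inv_jump L \<eta> t" using keyA[OF assms(1) t] unfolding h_def by (auto split: if_splits)
          then show False using x by auto
        qed
      qed
      also have "h (inv_jump L \<eta> t) = poisson_prod L \<rho> \<eta> * rrate L w f \<alpha> \<gamma> \<eta> t"
        unfolding h_def by (rule keyB[OF assms(1) t])
      finally show "(\<Sum>\<eta>'\<in>F. if jump L \<eta>' t = \<eta> then poisson_prod L \<rho> \<eta>' * jrate L w f \<alpha> \<gamma> \<eta>' t else 0)
          = poisson_prod L \<rho> \<eta> * rrate L w f \<alpha> \<gamma> \<eta> t" unfolding h_def by simp
    qed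
    also have "\<dots> = poisson_prod L \<rho> \<eta> * (\<Sum>t\<in>trans_idx L. jrate L w f \<alpha> \<gamma> \<eta> t)"
      by (simp add: sum_distrib_left[symmetric] rate_balance[OF assms(1)])
    also have "(\<Sum>t\<in>trans_idx L. jrate L w f \<alpha> \<gamma> \<eta> t) = (\<Sum>\<^sub>\<infinity>\<eta>'\<in>configs L - {\<eta>}. qrate L w f \<alpha> \<gamma> \<eta> \<eta>')"
    proof -
      define G where "G = jump L \<eta> ` trans_idx L"
      have finG: "finite G" unfolding G_def using finT by simp
      have GS: "G \<subseteq> configs L - {\<eta>}" unfolding G_def using jump_in[OF \<eta>] by auto
      have "(\<Sum>\<^sub>\<infinity>\<eta>'\<in>configs L - {\<eta>}. qrate L w f \<alpha> \<gamma> \<eta> \<eta>') = (\<Sum>\<^sub>\<infinity>\<eta>'\<in>G. qrate L w f \<alpha> \<gamma> \<eta> \<eta>')"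
      proof (rule infsum_cong_neutral)
        fix x assume x: "x \<in> configs L - {\<eta>} - G"
        show "qrate L w f \<alpha> \<gamma> \<eta> x = 0" unfolding qrate_def
          by (rule sum.neutral) (use x in \<open>auto simp: G_def\<close>)
      qed (use GS in auto)
      also have "\<dots> = (\<Sum>\<eta>'\<in>G. \<Sum>t\<in>trans_idx L. if jump L \<eta> t = \<eta>' then jrate L w f \<alpha> \<gamma> \<eta> t else 0)"
        using finG by (simp add: qrate_def)
      also have "\<dots> = (\<Sum>t\<in>trans_idx L. \<Sum>\<eta>'\<in>G. if jump L \<eta> t = \<eta>' then jrate L w f \<alpha> \<gamma> \<eta> t else 0)"
        by (rule sum.swap)
      also have "\<dots> = (\<Sum>t\<in>trans_idx L. jrate L w f \<alpha> \<gamma> \<eta> t)"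
        using finG by (intro sum.cong) (auto simp: G_def)
      finally show ?thesis by simp
    qed
    finally show "(\<Sum>\<^sub>\<infinity>\<eta>'\<in>configs L - {\<eta>}. poisson_prod L \<rho> \<eta>' * qrate L w f \<alpha> \<gamma> \<eta>' \<eta>) =
         poisson_prod L \<rho> \<eta> * (\<Sum>\<^sub>\<infinity>\<eta>'\<in>configs L - {\<eta>}. qrate L w f \<alpha> \<gamma> \<eta> \<eta>')" .
  qed
  show "\<forall>\<eta>\<in>configs L. poisson_prod L \<rho> (shift L \<eta>) = poisson_prod L \<rho> \<eta>"
  proof
    fix \<eta> :: config
    define H where "H k = (\<Prod>i\<in>{1,2}. \<rho> i ^ \<eta> i k * exp (- \<rho> i) / fact (\<eta> i k))" for k
    have "poisson_prod L \<rho> (shift L \<eta>) = (\<Prod>k\<in>{0..<L}. H (succ_site L k))"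
      unfolding poisson_prod_def H_def shift_def by (intro prod.cong) auto
    also have "\<dots> = (\<Prod>k\<in>{0..<L}. H k)" by (rule prod_succ[OF L0])
    finally show "poisson_prod L \<rho> (shift L \<eta>) = poisson_prod L \<rho> \<eta>" unfolding poisson_prod_def H_def .
  qed
qed

end
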